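(* Let $R$ be a noetherian commutative ring with unit, let $L$ and $K$ be abelian monoids admitting cancellation, let $B=\bigoplus_{u\in L}B_u$ be an $L$-graded $R$-algebra and $A=\bigoplus_{w\in K}A_w$ a $K$-graded $R$-algebra without zero-divisors, and let $(\varphi,F)$ be a morphism from $B$ to $A$. Assume that the weight monoid $S(B)=\{u\in L;\ B_u\ne 0\}$ is finitely generated and that $\varphi$ restricts to an isomorphism $B_u\to A_{F(u)}$ for every $u\in L$. If $A$ is finitely generated over $R$, then $B$ is finitely generated over $R$.
   Context: For an abelian monoid $K$, a $K$-graded $R$-algebra is an associative commutative $R$-algebra with unit with a decomposition $A=\bigoplus_{w\in K}A_w$ into $R$-submodules with $A_wA_{w'}\subseteq A_{w+w'}$. A morphism from an $L$-graded algebra $B$ to a $K$-graded algebra $A$ is a pair $(\varphi,F)$ where $\varphi\colon B\to A$ is a homomorphism of $R$-algebras and $F\colon L\to K$ is a homomorphism of monoids with $\varphi(B_u)\subseteq A_{F(u)}$ for all $u\in L$. *)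

theory Defs
  imports "HOL-Algebra.Algebra"
begin

text \<open>A commutative unital R-algebra is a commutative ring A together with a
ring homomorphism iota from R to A (the structure map); scalar multiplication
of r on x is (iota r) times x.\<close>

definition r_algebra ::
  "('r,'m) ring_scheme \<Rightarrow> ('a,'n) ring_scheme \<Rightarrow> ('r \<Rightarrow> 'a) \<Rightarrow> bool" where
  "r_algebra R A \<iota> \<longleftrightarrow> cring R \<and> cring A \<and> \<iota> \<in> ring_hom R A"

definition r_submodule ::
  "('r,'m) ring_scheme \<Rightarrow> ('a,'n) ring_scheme \<Rightarrow> ('r \<Rightarrow> 'a) \<Rightarrow> 'a set \<Rightarrow> bool" where
  "r_submodule R A \<iota> M \<longleftrightarrow> M \<subseteq> carrier A \<and> \<zero>\<^bsub>A\<^esub> \<in> M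
     \<and> (\<forall>x\<in>M. \<forall>y\<in>M. x \<oplus>\<^bsub>A\<^esub> y \<in> M)
     \<and> (\<forall>r\<in>carrier R. \<forall>x\<in>M. \<iota> r \<otimes>\<^bsub>A\<^esub> x \<in> M)"

definition cancel_comm_monoid :: "('k,'m) monoid_scheme \<Rightarrow> bool" where
  "cancel_comm_monoid K \<longleftrightarrow> comm_monoid K \<and>
     (\<forall>a\<in>carrier K. \<forall>b\<in>carrier K. \<forall>c\<in>carrier K. a \<otimes>\<^bsub>K\<^esub> b = a \<otimes>\<^bsub>K\<^esub> c \<longrightarrow> b = c)"

definition graded_algebra ::
  "('r,'m) ring_scheme \<Rightarrow> ('a,'n) ring_scheme \<Rightarrow> ('r \<Rightarrow> 'a)
     \<Rightarrow> ('k,'p) monoid_scheme \<Rightarrow> ('k \<Rightarrow> 'a set) \<Rightarrow> bool" where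
  "graded_algebra R A \<iota> K Ag \<longleftrightarrow> r_algebra R A \<iota> \<and> comm_monoid K
     \<and> (\<forall>w\<in>carrier K. r_submodule R A \<iota> (Ag w))
     \<and> (\<forall>w\<in>carrier K. \<forall>w'\<in>carrier K. \<forall>x\<in>Ag w. \<forall>y\<in>Ag w'.
            x \<otimes>\<^bsub>A\<^esub> y \<in> Ag (w \<otimes>\<^bsub>K\<^esub> w'))
     \<and> (\<forall>a\<in>carrier A. \<exists>!c. (\<forall>w\<in>carrier K. c w \<in> Ag w)
            \<and> (\<forall>w. w \<notin> carrier K \<longrightarrow> c w = \<zero>\<^bsub>A\<^esub>)
            \<and> finite {w. c w \<noteq> \<zero>\<^bsub>A\<^esub>}
            \<and> a = finsum A c {w. c w \<noteq> \<zero>\<^bsub>A\<^esub>})"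

definition graded_morphism ::
  "('r,'m) ring_scheme
     \<Rightarrow> ('b,'n) ring_scheme \<Rightarrow> ('r \<Rightarrow> 'b) \<Rightarrow> ('l,'p) monoid_scheme \<Rightarrow> ('l \<Rightarrow> 'b set)
     \<Rightarrow> ('a,'q) ring_scheme \<Rightarrow> ('r \<Rightarrow> 'a) \<Rightarrow> ('k,'s) monoid_scheme \<Rightarrow> ('k \<Rightarrow> 'a set)
     \<Rightarrow> ('b \<Rightarrow> 'a) \<Rightarrow> ('l \<Rightarrow> 'k) \<Rightarrow> bool" where
  "graded_morphism R B \<iota>B L Bg A \<iota>A K Ag \<phi> F \<longleftrightarrow>
     \<phi> \<in> ring_hom B A \<and> (\<forall>r\<in>carrier R. \<phi> (\<iota>B r) = \<iota>A r)
     \<and> F \<in> hom L K \<and> F \<one>\<^bsub>L\<^esub> = \<one>\<^bsub>K\<^esub>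
     \<and> (\<forall>u\<in>carrier L. \<phi> ` Bg u \<subseteq> Ag (F u))"

definition weight_monoid ::
  "('b,'n) ring_scheme \<Rightarrow> ('l,'p) monoid_scheme \<Rightarrow> ('l \<Rightarrow> 'b set) \<Rightarrow> 'l set" where
  "weight_monoid B L Bg = {u\<in>carrier L. Bg u \<noteq> {\<zero>\<^bsub>B\<^esub>}}"

inductive_set mon_gen :: "('l,'p) monoid_scheme \<Rightarrow> 'l set \<Rightarrow> 'l set"
  for L and T where
    one: "\<one>\<^bsub>L\<^esub> \<in> mon_gen L T"
  | incl: "t \<in> T \<Longrightarrow> t \<in> mon_gen L T"
  | mult: "\<lbrakk>x \<in> mon_gen L T; y \<in> mon_gen L T\<rbrakk> \<Longrightarrow> x \<otimes>\<^bsub>L\<^esub> y \<in> mon_gen L T"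

definition fg_monoid_set :: "('l,'p) monoid_scheme \<Rightarrow> 'l set \<Rightarrow> bool" where
  "fg_monoid_set L S \<longleftrightarrow> (\<exists>T. finite T \<and> T \<subseteq> carrier L \<and> mon_gen L T = S)"

definition fg_algebra ::
  "('r,'m) ring_scheme \<Rightarrow> ('a,'n) ring_scheme \<Rightarrow> ('r \<Rightarrow> 'a) \<Rightarrow> bool" where
  "fg_algebra R A \<iota> \<longleftrightarrow> (\<exists>G. finite G \<and> G \<subseteq> carrier A
      \<and> generate_ring A (\<iota> ` carrier R \<union> G) = carrier A)"

end

theory Submission
  imports Defs
begin



lemma nat_seq_mono_sub:
  fixes s :: "nat \<Rightarrow> nat"
  shows "\<exists>r::nat\<Rightarrow>nat. strict_mono r \<and> mono (\<lambda>n. s (r n))"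
proof -
  obtain f where f: "strict_mono f" "monoseq (\<lambda>n. s (f n))" using seq_monosub by blast
  show ?thesis
  proof (cases "incseq (\<lambda>n. s (f n))")
    case True then show ?thesis using f by blast
  next
    case False
    then have dec: "decseq (\<lambda>n. s (f n))" using f(2) monoseq_iff by blast
    define v where "v = (LEAST v. v \<in> range (\<lambda>n. s (f n)))"
    have "v \<in> range (\<lambda>n. s (f n))" unfolding v_def by (rule LeastI[of _ "s (f 0)"]) auto
    then obtain N where N: "s (f N) = v" by auto
    have c: "s (f n) = v" if "n \<ge> N" for n
    proof -
      have "s (f n) \<le> s (f N)" using dec that by (auto simp: decseq_def)
      moreover have "v \<le> s (f n)" unfolding v_def by (rule Least_le) auto
      ultimately show ?thesis using N by simp
    qed
    show ?thesis
      apply (rule exI[of _ "\<lambda>n. f (n + N)"])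
      using f(1) c by (auto simp: strict_mono_def mono_def)
  qed
qed

lemma seq_mono_sub_fin:
  fixes f :: "nat \<Rightarrow> 'j \<Rightarrow> nat"
  assumes "finite J"
  shows "\<exists>r::nat\<Rightarrow>nat. strict_mono r \<and> (\<forall>j\<in>J. mono (\<lambda>n. f (r n) j))"
  using assms
proof (induction J arbitrary: f rule: finite_induct)
  case empty
  show ?case by (auto intro!: exI[of _ "\<lambda>n::nat. n"] simp: strict_mono_def)
next
  case (insert j J)
  obtain r1 :: "nat \<Rightarrow> nat" where r1: "strict_mono r1" "\<forall>j\<in>J. mono (\<lambda>n. f (r1 n) j)" using insert.IH[of f] by blast
  obtain r2 :: "nat \<Rightarrow> nat" where r2: "strict_mono r2" "mono (\<lambda>n. f (r1 (r2 n)) j)"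
    using nat_seq_mono_sub[of "\<lambda>n. f (r1 n) j"] by blast
  have "strict_mono (r1 \<circ> r2)" using r1(1) r2(1) by (simp add: strict_mono_def)
  moreover have "mono (\<lambda>n. f (r1 (r2 n)) j')" if "j' \<in> J" for j'
  proof -
    have "mono r2" using r2(1) strict_mono_mono by blast
    then show ?thesis using r1(2) that by (auto simp: mono_def)
  qed
  ultimately show ?case using r2(2) by (intro exI[of _ "r1 \<circ> r2"]) (auto simp: comp_def)
qed

lemma dickson_finite:
  fixes Xs :: "('j \<Rightarrow> nat) set"
  assumes J: "finite J" and Xs: "\<And>z j. z \<in> Xs \<Longrightarrow> j \<notin> J \<Longrightarrow> z j = 0"
  shows "finite {m\<in>Xs. \<forall>y\<in>Xs. y \<le> m \<longrightarrow> y = m}"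
proof (rule ccontr)
  let ?M = "{m\<in>Xs. \<forall>y\<in>Xs. y \<le> m \<longrightarrow> y = m}"
  assume "infinite ?M"
  then obtain g :: "nat \<Rightarrow> 'j \<Rightarrow> nat" where g: "inj g" "range g \<subseteq> ?M"
    using infinite_countable_subset by blast
  obtain r :: "nat \<Rightarrow> nat" where r: "strict_mono r" "\<forall>j\<in>J. mono (\<lambda>n. g (r n) j)"
    using seq_mono_sub_fin[OF J] by blast
  have le: "g (r 0) \<le> g (r 1)"
  proof (rule le_funI)
    fix j show "g (r 0) j \<le> g (r 1) j"
    proof (cases "j \<in> J")
      case True then show ?thesis using r(2) by (auto simp: mono_def)
    next
      case False
      have "g (r 0) \<in> Xs" "g (r 1) \<in> Xs" using g(2) by auto
      then show ?thesis using Xs[of "g (r 0)" j] Xs[of "g (r 1)" j] False by simp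
    qed
  qed
  have "g (r 0) = g (r 1)" using g(2) le by blast
  then have "r 0 = r 1" using g(1) by (simp add: inj_eq)
  then show False using r(1) by (simp add: strict_mono_eq)
qed

lemma dickson_below:
  fixes Xs :: "('j \<Rightarrow> nat) set"
  assumes J: "finite J" and Xs: "\<And>z j. z \<in> Xs \<Longrightarrow> j \<notin> J \<Longrightarrow> z j = 0"
    and x: "x \<in> Xs"
  shows "\<exists>m\<in>{m\<in>Xs. \<forall>y\<in>Xs. y \<le> m \<longrightarrow> y = m}. m \<le> x"
proof -
  have "\<forall>x. sum x J = n \<longrightarrow> x \<in> Xs \<longrightarrow> (\<exists>m\<in>{m\<in>Xs. \<forall>y\<in>Xs. y \<le> m \<longrightarrow> y = m}. m \<le> x)" for n
  proof (induction n rule: less_induct)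
    case (less n)
    show ?case
    proof (intro allI impI)
      fix x assume xn: "sum x J = n" and xX: "x \<in> Xs"
      show "\<exists>m\<in>{m\<in>Xs. \<forall>y\<in>Xs. y \<le> m \<longrightarrow> y = m}. m \<le> x"
      proof (cases "\<forall>y\<in>Xs. y \<le> x \<longrightarrow> y = x")
        case True then show ?thesis using xX by auto
      next
        case False
        then obtain y where y: "y \<in> Xs" "y \<le> x" "y \<noteq> x" by blast
        then obtain j where j: "y j \<noteq> x j" by (meson ext)
        then have jJ: "j \<in> J" using Xs[OF xX, of j] Xs[OF y(1), of j] by fastforce
        have "sum y J < sum x J"
          apply (rule sum_strict_mono_ex1[OF J])
          using y(2) j jJ by (auto simp: le_fun_def intro!: bexI[of _ j] le_neq_implies_less)
        then obtain m where "m \<in> {m\<in>Xs. \<forall>y\<in>Xs. y \<le> m \<longrightarrow> y = m}" "m \<le> y"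
          using less.IH xn y(1) by blast
        then show ?thesis using y(2) order_trans by blast
      qed
    qed
  qed
  then show ?thesis using x by blast
qed




definition pw :: "('x,'s) monoid_scheme \<Rightarrow> ('j \<Rightarrow> 'x) \<Rightarrow> 'j set \<Rightarrow> ('j \<Rightarrow> nat) \<Rightarrow> 'x" where
  "pw Mo v J z = finprod Mo (\<lambda>j. v j [^]\<^bsub>Mo\<^esub> z j) J"

context comm_monoid begin

lemma pw_closed: "v \<in> J \<rightarrow> carrier G \<Longrightarrow> pw G v J z \<in> carrier G"
  unfolding pw_def by (intro finprod_closed) auto

lemma pw_add: "v \<in> J \<rightarrow> carrier G \<Longrightarrow> pw G v J (\<lambda>j. z j + z' j) = pw G v J z \<otimes> pw G v J z'"
proof -
  assume v: "v \<in> J \<rightarrow> carrier G"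
  have "(\<Otimes>j\<in>J. v j [^] (z j + z' j)) = (\<Otimes>j\<in>J. v j [^] z j \<otimes> v j [^] z' j)"
    using v by (intro finprod_cong') (auto simp: nat_pow_mult Pi_def)
  also have "\<dots> = (\<Otimes>j\<in>J. v j [^] z j) \<otimes> (\<Otimes>j\<in>J. v j [^] z' j)"
    using v by (intro finprod_multf) (auto simp: Pi_def)
  finally show ?thesis unfolding pw_def .
qed

lemma pw_zero: "pw G v J (\<lambda>_. 0) = \<one>" unfolding pw_def by simp

lemma pw_cong: "(\<And>j. j \<in> J \<Longrightarrow> z j = z' j) \<Longrightarrow> v \<in> J \<rightarrow> carrier G \<Longrightarrow> pw G v J z = pw G v J z'"
  unfolding pw_def by (auto intro!: finprod_cong')

lemma pw_delta: "finite J \<Longrightarrow> j0 \<in> J \<Longrightarrow> v \<in> J \<rightarrow> carrier G \<Longrightarrow>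
   pw G v J (\<lambda>j. if j = j0 then 1 else 0) = v j0"
proof -
  assume a: "finite J" "j0 \<in> J" "v \<in> J \<rightarrow> carrier G"
  have "pw G v J (\<lambda>j. if j = j0 then 1 else 0) = (\<Otimes>j\<in>J. if j0 = j then v j else \<one>)"
    unfolding pw_def using a(3) by (intro finprod_cong') (auto simp: Pi_def)
  also have "\<dots> = v j0" using finprod_singleton[OF a(2,1,3)] .
  finally show ?thesis .
qed

end

lemma hom_pow_monoid:
  assumes "monoid G" "monoid H" "h \<in> hom G H" "h \<one>\<^bsub>G\<^esub> = \<one>\<^bsub>H\<^esub>" "x \<in> carrier G"
  shows "h (x [^]\<^bsub>G\<^esub> (n::nat)) = h x [^]\<^bsub>H\<^esub> n"
  using assms
  by (induction n) (auto simp: hom_mult monoid.nat_pow_closed)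

lemma pw_hom:
  assumes G: "comm_monoid G" and H: "comm_monoid H" and h: "h \<in> hom G H" "h \<one>\<^bsub>G\<^esub> = \<one>\<^bsub>H\<^esub>"
    and J: "finite J" and v: "v \<in> J \<rightarrow> carrier G"
  shows "h (pw G v J z) = pw H (\<lambda>j. h (v j)) J z"
  using J v
proof (induction J rule: finite_induct)
  case empty
  then show ?case using h G H by (simp add: pw_def comm_monoid.finprod_empty)
next
  case (insert j J)
  interpret G: comm_monoid G by (rule G)
  interpret H: comm_monoid H by (rule H)
  have vj: "v j \<in> carrier G" and vJ: "v \<in> J \<rightarrow> carrier G" using insert by auto
  have hv: "(\<lambda>j. h (v j)) \<in> insert j J \<rightarrow> carrier H" using insert(4) h(1) by (auto simp: hom_def)
  have "pw G v (insert j J) z = v j [^]\<^bsub>G\<^esub> z j \<otimes>\<^bsub>G\<^esub> pw G v J z"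
    unfolding pw_def using insert vj vJ by (subst G.finprod_insert) auto
  then have "h (pw G v (insert j J) z) = h (v j [^]\<^bsub>G\<^esub> z j) \<otimes>\<^bsub>H\<^esub> h (pw G v J z)"
    using h(1) vj vJ G.pw_closed[OF vJ, of z] G.nat_pow_closed[OF vj, of "z j"] by (simp add: hom_mult)
  also have "\<dots> = h (v j) [^]\<^bsub>H\<^esub> z j \<otimes>\<^bsub>H\<^esub> pw H (\<lambda>j. h (v j)) J z"
    using hom_pow_monoid[OF G.monoid_axioms H.monoid_axioms h vj] insert.IH[OF vJ] by simp
  also have "\<dots> = pw H (\<lambda>j. h (v j)) (insert j J) z"
    unfolding pw_def using insert hv by (subst H.finprod_insert) auto
  finally show ?case .
qed




inductive_set tsum :: "('r,'m) ring_scheme \<Rightarrow> ('a,'n) ring_scheme \<Rightarrow> ('r \<Rightarrow> 'a) \<Rightarrow> 'a set \<Rightarrow> 'a set"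
  for R A \<iota> M where
  tz: "\<zero>\<^bsub>A\<^esub> \<in> tsum R A \<iota> M"
| ts: "r \<in> carrier R \<Longrightarrow> m \<in> M \<Longrightarrow> s \<in> tsum R A \<iota> M \<Longrightarrow> \<iota> r \<otimes>\<^bsub>A\<^esub> m \<oplus>\<^bsub>A\<^esub> s \<in> tsum R A \<iota> M"

context ring_hom_cring begin

lemma tsum_carr: assumes "M \<subseteq> carrier S" shows "s \<in> tsum R S h M \<Longrightarrow> s \<in> carrier S"
  by (induction rule: tsum.induct) (use assms in auto)

lemma tsum_add: assumes M: "M \<subseteq> carrier S" shows "s \<in> tsum R S h M \<Longrightarrow> t \<in> tsum R S h M \<Longrightarrow> s \<oplus>\<^bsub>S\<^esub> t \<in> tsum R S h M"
proof (induction rule: tsum.induct)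
  case tz then show ?case using tsum_carr M by simp
next
  case (ts r m s)
  then have "h r \<otimes>\<^bsub>S\<^esub> m \<oplus>\<^bsub>S\<^esub> s \<oplus>\<^bsub>S\<^esub> t = h r \<otimes>\<^bsub>S\<^esub> m \<oplus>\<^bsub>S\<^esub> (s \<oplus>\<^bsub>S\<^esub> t)"
    using tsum_carr M by (auto intro!: S.a_assoc)
  then show ?case using ts by (auto intro: tsum.ts)
qed

lemma tsum_neg: assumes M: "M \<subseteq> carrier S" shows "s \<in> tsum R S h M \<Longrightarrow> \<ominus>\<^bsub>S\<^esub> s \<in> tsum R S h M"
proof (induction rule: tsum.induct)
  case tz then show ?case by (simp add: tsum.tz)
next
  case (ts r m s)
  have sc: "s \<in> carrier S" using ts tsum_carr M by auto
  have mc: "m \<in> carrier S" using ts M by auto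
  have eq: "\<ominus>\<^bsub>S\<^esub> (h r \<otimes>\<^bsub>S\<^esub> m \<oplus>\<^bsub>S\<^esub> s) = h (\<ominus>\<^bsub>R\<^esub> r) \<otimes>\<^bsub>S\<^esub> m \<oplus>\<^bsub>S\<^esub> \<ominus>\<^bsub>S\<^esub> s"
    using ts(1) sc mc by (simp add: S.minus_add S.l_minus)
  show ?case unfolding eq by (rule tsum.ts[OF R.a_inv_closed[OF ts(1)] ts(2) ts(4)])
qed

lemma tsum_term: "r \<in> carrier R \<Longrightarrow> m \<in> M \<Longrightarrow> M \<subseteq> carrier S \<Longrightarrow> h r \<otimes>\<^bsub>S\<^esub> m \<in> tsum R S h M"
proof -
  assume a: "r \<in> carrier R" "m \<in> M" "M \<subseteq> carrier S"
  have "h r \<otimes>\<^bsub>S\<^esub> m \<oplus>\<^bsub>S\<^esub> \<zero>\<^bsub>S\<^esub> \<in> tsum R S h M" by (rule tsum.ts[OF a(1,2) tsum.tz])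
  then show ?thesis using a by auto
qed

lemma tsum_mult_term:
  assumes M: "M \<subseteq> carrier S" "\<And>m m'. m \<in> M \<Longrightarrow> m' \<in> M \<Longrightarrow> m \<otimes>\<^bsub>S\<^esub> m' \<in> M"
    and r: "r \<in> carrier R" "m \<in> M"
  shows "s \<in> tsum R S h M \<Longrightarrow> (h r \<otimes>\<^bsub>S\<^esub> m) \<otimes>\<^bsub>S\<^esub> s \<in> tsum R S h M"
proof (induction rule: tsum.induct)
  case tz then show ?case using M r by (auto simp: tsum.tz)
next
  case (ts r' m' s)
  have sc: "s \<in> carrier S" using ts tsum_carr M by auto
  have mc: "m \<in> carrier S" "m' \<in> carrier S" using ts M r by auto
  have "(h r \<otimes>\<^bsub>S\<^esub> m) \<otimes>\<^bsub>S\<^esub> (h r' \<otimes>\<^bsub>S\<^esub> m' \<oplus>\<^bsub>S\<^esub> s)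
     = h (r \<otimes>\<^bsub>R\<^esub> r') \<otimes>\<^bsub>S\<^esub> (m \<otimes>\<^bsub>S\<^esub> m') \<oplus>\<^bsub>S\<^esub> (h r \<otimes>\<^bsub>S\<^esub> m) \<otimes>\<^bsub>S\<^esub> s"
  proof -
    have hc: "h r \<in> carrier S" "h r' \<in> carrier S" using r ts(1) by auto
    have "(h r \<otimes>\<^bsub>S\<^esub> m) \<otimes>\<^bsub>S\<^esub> (h r' \<otimes>\<^bsub>S\<^esub> m' \<oplus>\<^bsub>S\<^esub> s)
       = (h r \<otimes>\<^bsub>S\<^esub> m) \<otimes>\<^bsub>S\<^esub> (h r' \<otimes>\<^bsub>S\<^esub> m') \<oplus>\<^bsub>S\<^esub> (h r \<otimes>\<^bsub>S\<^esub> m) \<otimes>\<^bsub>S\<^esub> s"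
      using sc mc hc by (simp add: S.r_distr)
    also have "(h r \<otimes>\<^bsub>S\<^esub> m) \<otimes>\<^bsub>S\<^esub> (h r' \<otimes>\<^bsub>S\<^esub> m') = (h r \<otimes>\<^bsub>S\<^esub> h r') \<otimes>\<^bsub>S\<^esub> (m \<otimes>\<^bsub>S\<^esub> m')"
      using mc hc by (simp add: S.m_ac)
    also have "h r \<otimes>\<^bsub>S\<^esub> h r' = h (r \<otimes>\<^bsub>R\<^esub> r')" using r ts(1) by simp
    finally show ?thesis .
  qed
  note eq = this
  show ?case unfolding eq by (rule tsum.ts[OF R.m_closed[OF r(1) ts(1)] M(2)[OF r(2) ts(2)] ts(4)])
qed

lemma tsum_mult:
  assumes M: "M \<subseteq> carrier S" "\<And>m m'. m \<in> M \<Longrightarrow> m' \<in> M \<Longrightarrow> m \<otimes>\<^bsub>S\<^esub> m' \<in> M"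
  shows "s \<in> tsum R S h M \<Longrightarrow> t \<in> tsum R S h M \<Longrightarrow> s \<otimes>\<^bsub>S\<^esub> t \<in> tsum R S h M"
proof (induction rule: tsum.induct)
  case tz then show ?case using M tsum_carr by (auto simp: tsum.tz)
next
  case (ts r m s)
  have sc: "s \<in> carrier S" "t \<in> carrier S" using ts tsum_carr M by auto
  have mc: "m \<in> carrier S" using ts M by auto
  have "(h r \<otimes>\<^bsub>S\<^esub> m \<oplus>\<^bsub>S\<^esub> s) \<otimes>\<^bsub>S\<^esub> t = (h r \<otimes>\<^bsub>S\<^esub> m) \<otimes>\<^bsub>S\<^esub> t \<oplus>\<^bsub>S\<^esub> s \<otimes>\<^bsub>S\<^esub> t"
    using sc mc ts(1) by (simp add: S.l_distr)
  then show ?case using ts M tsum_mult_term[OF M ts(1,2)] tsum_add by auto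
qed

lemma tsum_mono: assumes "M \<subseteq> M'" shows "s \<in> tsum R S h M \<Longrightarrow> s \<in> tsum R S h M'"
  by (induction rule: tsum.induct) (use assms in \<open>auto intro: tsum.intros\<close>)

end

lemma finsum_in_closed:
  assumes "abelian_monoid A" "finite D" "Sm \<subseteq> carrier A" "\<zero>\<^bsub>A\<^esub> \<in> Sm"
    "\<And>x y. x \<in> Sm \<Longrightarrow> y \<in> Sm \<Longrightarrow> x \<oplus>\<^bsub>A\<^esub> y \<in> Sm" "\<And>i. i \<in> D \<Longrightarrow> f i \<in> Sm"
  shows "finsum A f D \<in> Sm"
  using assms(2,6)
proof (induction D rule: finite_induct)
  case empty then show ?case using assms(1,4) by (simp add: abelian_monoid.finsum_empty)
next
  case (insert i D)
  then show ?case using assms(1,3,5) by (subst abelian_monoid.finsum_insert) (auto simp: Pi_def)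
qed




locale graded =
  fixes R :: "('r,'m) ring_scheme" and A :: "('a,'n) ring_scheme" and \<iota> :: "'r \<Rightarrow> 'a"
    and K :: "('k,'p) monoid_scheme" and Ag :: "'k \<Rightarrow> 'a set"
  assumes ga: "graded_algebra R A \<iota> K Ag"
begin

lemma cR: "cring R" and cA: "cring A" and ihom: "\<iota> \<in> ring_hom R A" and cK: "comm_monoid K"
  using ga by (auto simp: graded_algebra_def r_algebra_def)

sublocale H: ring_hom_cring R A \<iota> using cR cA ihom by (simp add: ring_hom_cring_def ring_hom_cring_axioms_def)
sublocale K: comm_monoid K by (rule cK)

lemma Ag_sub: "w \<in> carrier K \<Longrightarrow> r_submodule R A \<iota> (Ag w)"
  using ga by (auto simp: graded_algebra_def)

lemma Ag_carrier: "w \<in> carrier K \<Longrightarrow> x \<in> Ag w \<Longrightarrow> x \<in> carrier A"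
  using Ag_sub unfolding r_submodule_def by blast
lemma Ag_zero: "w \<in> carrier K \<Longrightarrow> \<zero>\<^bsub>A\<^esub> \<in> Ag w"
  using Ag_sub by (auto simp: r_submodule_def)
lemma Ag_add: "w \<in> carrier K \<Longrightarrow> x \<in> Ag w \<Longrightarrow> y \<in> Ag w \<Longrightarrow> x \<oplus>\<^bsub>A\<^esub> y \<in> Ag w"
  using Ag_sub by (auto simp: r_submodule_def)
lemma Ag_smul: "w \<in> carrier K \<Longrightarrow> r \<in> carrier R \<Longrightarrow> x \<in> Ag w \<Longrightarrow> \<iota> r \<otimes>\<^bsub>A\<^esub> x \<in> Ag w"
  using Ag_sub by (auto simp: r_submodule_def)
lemma Ag_mult: "w \<in> carrier K \<Longrightarrow> w' \<in> carrier K \<Longrightarrow> x \<in> Ag w \<Longrightarrow> y \<in> Ag w' \<Longrightarrow> x \<otimes>\<^bsub>A\<^esub> y \<in> Ag (w \<otimes>\<^bsub>K\<^esub> w')"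
  using ga by (auto simp: graded_algebra_def)
lemma Ag_neg: "w \<in> carrier K \<Longrightarrow> x \<in> Ag w \<Longrightarrow> \<ominus>\<^bsub>A\<^esub> x \<in> Ag w"
proof -
  assume a: "w \<in> carrier K" "x \<in> Ag w"
  have xc: "x \<in> carrier A" using a Ag_carrier by auto
  have "\<iota> (\<ominus>\<^bsub>R\<^esub> \<one>\<^bsub>R\<^esub>) \<otimes>\<^bsub>A\<^esub> x \<in> Ag w" using Ag_smul[OF a(1) H.R.a_inv_closed[OF H.R.one_closed] a(2)] .
  moreover have "\<iota> (\<ominus>\<^bsub>R\<^esub> \<one>\<^bsub>R\<^esub>) \<otimes>\<^bsub>A\<^esub> x = \<ominus>\<^bsub>A\<^esub> x" using xc by (simp add: H.S.l_minus)
  ultimately show ?thesis by simp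
qed

definition valid where
  "valid c \<longleftrightarrow> (\<forall>w\<in>carrier K. c w \<in> Ag w) \<and> (\<forall>w. w \<notin> carrier K \<longrightarrow> c w = \<zero>\<^bsub>A\<^esub>)
      \<and> finite {w. c w \<noteq> \<zero>\<^bsub>A\<^esub>}"

lemma valid_carr: "valid c \<Longrightarrow> c w \<in> carrier A"
  unfolding valid_def using Ag_carrier by (cases "w \<in> carrier K") auto

lemma valid_sum: "valid c \<Longrightarrow> finite D \<Longrightarrow> {w. c w \<noteq> \<zero>\<^bsub>A\<^esub>} \<subseteq> D \<Longrightarrow>
    finsum A c D = finsum A c {w. c w \<noteq> \<zero>\<^bsub>A\<^esub>}"
  by (rule H.S.add.finprod_mono_neutral_cong_right) (auto simp: valid_carr)

lemma dec_ex1: "a \<in> carrier A \<Longrightarrow> \<exists>!c. valid c \<and> a = finsum A c {w. c w \<noteq> \<zero>\<^bsub>A\<^esub>}"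
  using ga unfolding graded_algebra_def valid_def by blast

definition comp where "comp a = (THE c. valid c \<and> a = finsum A c {w. c w \<noteq> \<zero>\<^bsub>A\<^esub>})"

lemma comp_valid: "a \<in> carrier A \<Longrightarrow> valid (comp a) \<and> a = finsum A (comp a) {w. comp a w \<noteq> \<zero>\<^bsub>A\<^esub>}"
  unfolding comp_def by (rule theI'[OF dec_ex1])

lemma comp_eq:
  assumes "valid c" "finite D" "{w. c w \<noteq> \<zero>\<^bsub>A\<^esub>} \<subseteq> D" "a = finsum A c D"
  shows "comp a = c"
proof -
  have ac: "a \<in> carrier A" using assms valid_carr by (auto intro: H.S.finsum_closed)
  have "a = finsum A c {w. c w \<noteq> \<zero>\<^bsub>A\<^esub>}" using assms valid_sum by simp
  then show ?thesis unfolding comp_def using assms(1) dec_ex1[OF ac] by (intro the1_equality) auto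
qed

lemma comp_hom:
  assumes v: "v \<in> carrier K" and x: "x \<in> Ag v"
  shows "comp x = (\<lambda>w. if w = v then x else \<zero>\<^bsub>A\<^esub>)"
proof (rule comp_eq)
  show "valid (\<lambda>w. if w = v then x else \<zero>\<^bsub>A\<^esub>)" unfolding valid_def using v x Ag_zero
    by (auto intro: finite_subset[of _ "{v}"])
  show "finite {v}" by simp
  show "{w. (if w = v then x else \<zero>\<^bsub>A\<^esub>) \<noteq> \<zero>\<^bsub>A\<^esub>} \<subseteq> {v}" by auto
  show "x = finsum A (\<lambda>w. if w = v then x else \<zero>\<^bsub>A\<^esub>) {v}" using Ag_carrier[OF v x] by simp
qed

lemma comp_add:
  assumes a: "a \<in> carrier A" and b: "b \<in> carrier A"
  shows "comp (a \<oplus>\<^bsub>A\<^esub> b) = (\<lambda>w. comp a w \<oplus>\<^bsub>A\<^esub> comp b w)"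
proof -
  let ?D = "{w. comp a w \<noteq> \<zero>\<^bsub>A\<^esub>} \<union> {w. comp b w \<noteq> \<zero>\<^bsub>A\<^esub>}"
  have va: "valid (comp a)" and ea: "a = finsum A (comp a) {w. comp a w \<noteq> \<zero>\<^bsub>A\<^esub>}" using comp_valid[OF a] by auto
  have vb: "valid (comp b)" and eb: "b = finsum A (comp b) {w. comp b w \<noteq> \<zero>\<^bsub>A\<^esub>}" using comp_valid[OF b] by auto
  have fD: "finite ?D" using va vb by (auto simp: valid_def)
  show ?thesis
  proof (rule comp_eq)
    show "valid (\<lambda>w. comp a w \<oplus>\<^bsub>A\<^esub> comp b w)" unfolding valid_def
    proof (intro conjI)
      show "\<forall>w\<in>carrier K. comp a w \<oplus>\<^bsub>A\<^esub> comp b w \<in> Ag w" using va vb Ag_add by (auto simp: valid_def)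
      show "\<forall>w. w \<notin> carrier K \<longrightarrow> comp a w \<oplus>\<^bsub>A\<^esub> comp b w = \<zero>\<^bsub>A\<^esub>" using va vb by (auto simp: valid_def)
      show "finite {w. comp a w \<oplus>\<^bsub>A\<^esub> comp b w \<noteq> \<zero>\<^bsub>A\<^esub>}" 
        by (rule finite_subset[OF _ fD]) auto
    qed
    show "finite ?D" by (rule fD)
    show "{w. comp a w \<oplus>\<^bsub>A\<^esub> comp b w \<noteq> \<zero>\<^bsub>A\<^esub>} \<subseteq> ?D" by auto
    have "a = finsum A (comp a) ?D" using ea valid_sum[OF va fD] by auto
    moreover have "b = finsum A (comp b) ?D" using eb valid_sum[OF vb fD] by auto
    ultimately show "a \<oplus>\<^bsub>A\<^esub> b = finsum A (\<lambda>w. comp a w \<oplus>\<^bsub>A\<^esub> comp b w) ?D"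
      using va vb valid_carr by (simp add: H.S.finsum_addf)
  qed
qed

lemma comp_zero: "comp \<zero>\<^bsub>A\<^esub> = (\<lambda>w. \<zero>\<^bsub>A\<^esub>)"
  using comp_hom[OF K.one_closed Ag_zero[OF K.one_closed]] by auto

lemma comp_finsum:
  assumes "finite D" "f \<in> D \<rightarrow> carrier A"
  shows "comp (finsum A f D) = (\<lambda>w. finsum A (\<lambda>i. comp (f i) w) D)"
  using assms
proof (induction D rule: finite_induct)
  case empty then show ?case by (simp add: comp_zero)
next
  case (insert i D)
  have fi: "f i \<in> carrier A" and fD: "f \<in> D \<rightarrow> carrier A" using insert by auto
  have cc: "\<And>j w. f j \<in> carrier A \<Longrightarrow> comp (f j) w \<in> carrier A" using comp_valid valid_carr by blast
  have "comp (finsum A f (insert i D)) = comp (f i \<oplus>\<^bsub>A\<^esub> finsum A f D)"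
    using insert fi fD by (simp add: H.S.finsum_insert)
  also have "\<dots> = (\<lambda>w. comp (f i) w \<oplus>\<^bsub>A\<^esub> comp (finsum A f D) w)"
    using fi fD by (simp add: comp_add H.S.finsum_closed)
  also have "\<dots> = (\<lambda>w. finsum A (\<lambda>i. comp (f i) w) (insert i D))"
    using insert.IH[OF fD] insert(1,2) fi fD cc by (auto simp: H.S.finsum_insert Pi_def)
  finally show ?case .
qed

end



context graded begin

lemma comp_carr: "a \<in> carrier A \<Longrightarrow> comp a w \<in> carrier A"
  using comp_valid valid_carr by blast

lemma one_hom:
  assumes dom: "domain A"
    and canc: "\<forall>a\<in>carrier K. \<forall>b\<in>carrier K. \<forall>c\<in>carrier K. a \<otimes>\<^bsub>K\<^esub> b = a \<otimes>\<^bsub>K\<^esub> c \<longrightarrow> b = c"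
  shows "\<one>\<^bsub>A\<^esub> \<in> Ag \<one>\<^bsub>K\<^esub>"
proof -
  let ?c = "comp \<one>\<^bsub>A\<^esub>"
  let ?S = "{w. ?c w \<noteq> \<zero>\<^bsub>A\<^esub>}"
  have vc: "valid ?c" and e1: "\<one>\<^bsub>A\<^esub> = finsum A ?c ?S" using comp_valid[of "\<one>\<^bsub>A\<^esub>"] by auto
  have fS: "finite ?S" using vc by (auto simp: valid_def)
  have SK: "?S \<subseteq> carrier K" using vc by (auto simp: valid_def)
  have S1: "?S \<subseteq> {\<one>\<^bsub>K\<^esub>}"
  proof
    fix w0 assume w0S: "w0 \<in> ?S"
    show "w0 \<in> {\<one>\<^bsub>K\<^esub>}"
    proof (rule ccontr)
      assume ne: "w0 \<notin> {\<one>\<^bsub>K\<^esub>}"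
      have w0K: "w0 \<in> carrier K" using w0S SK by auto
      let ?x = "?c w0"
      have xA: "?x \<in> Ag w0" using vc w0K by (auto simp: valid_def)
      have xc: "?x \<in> carrier A" using valid_carr[OF vc] .
      have xnz: "?x \<noteq> \<zero>\<^bsub>A\<^esub>" using w0S by auto
      have cc: "\<And>w. ?c w \<in> carrier A" using valid_carr[OF vc] .
      have "?x = ?x \<otimes>\<^bsub>A\<^esub> \<one>\<^bsub>A\<^esub>" using xc by simp
      also have "\<dots> = ?x \<otimes>\<^bsub>A\<^esub> finsum A ?c ?S" by (simp only: e1[symmetric])
      also have "\<dots> = finsum A (\<lambda>w. ?x \<otimes>\<^bsub>A\<^esub> ?c w) ?S"
        by (rule H.S.finsum_rdistr[OF fS xc]) (simp add: cc Pi_def)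
      finally have xeq: "?x = finsum A (\<lambda>w. ?x \<otimes>\<^bsub>A\<^esub> ?c w) ?S" .
      have "comp ?x (w0 \<otimes>\<^bsub>K\<^esub> w0) = finsum A (\<lambda>w. comp (?x \<otimes>\<^bsub>A\<^esub> ?c w) (w0 \<otimes>\<^bsub>K\<^esub> w0)) ?S"
        apply (subst xeq)
        apply (subst comp_finsum[OF fS])
        using xc cc by (auto simp: Pi_def)
      also have "\<dots> = finsum A (\<lambda>w. if w0 = w then ?x \<otimes>\<^bsub>A\<^esub> ?c w else \<zero>\<^bsub>A\<^esub>) ?S"
      proof (rule H.S.finsum_cong')
        show "?S = ?S" by simp
        show "(\<lambda>w. if w0 = w then ?x \<otimes>\<^bsub>A\<^esub> ?c w else \<zero>\<^bsub>A\<^esub>) \<in> ?S \<rightarrow> carrier A" using xc cc by auto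
        fix w assume wS: "w \<in> ?S"
        have wK: "w \<in> carrier K" using wS SK by auto
        have "?x \<otimes>\<^bsub>A\<^esub> ?c w \<in> Ag (w0 \<otimes>\<^bsub>K\<^esub> w)"
          using Ag_mult[OF w0K wK xA] vc wK by (auto simp: valid_def)
        then have "comp (?x \<otimes>\<^bsub>A\<^esub> ?c w) = (\<lambda>u. if u = w0 \<otimes>\<^bsub>K\<^esub> w then ?x \<otimes>\<^bsub>A\<^esub> ?c w else \<zero>\<^bsub>A\<^esub>)"
          using comp_hom w0K wK by simp
        moreover have "(w0 \<otimes>\<^bsub>K\<^esub> w0 = w0 \<otimes>\<^bsub>K\<^esub> w) = (w0 = w)" using canc w0K wK by blast
        ultimately show "comp (?x \<otimes>\<^bsub>A\<^esub> ?c w) (w0 \<otimes>\<^bsub>K\<^esub> w0) = (if w0 = w then ?x \<otimes>\<^bsub>A\<^esub> ?c w else \<zero>\<^bsub>A\<^esub>)"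
          by simp
      qed
      also have "\<dots> = ?x \<otimes>\<^bsub>A\<^esub> ?c w0"
        using H.S.finsum_singleton[OF w0S fS, of "\<lambda>w. ?x \<otimes>\<^bsub>A\<^esub> ?c w"] xc cc by auto
      finally have eqA: "comp ?x (w0 \<otimes>\<^bsub>K\<^esub> w0) = ?x \<otimes>\<^bsub>A\<^esub> ?x" .
      have "w0 \<otimes>\<^bsub>K\<^esub> w0 \<noteq> w0"
      proof
        assume "w0 \<otimes>\<^bsub>K\<^esub> w0 = w0"
        then have "w0 \<otimes>\<^bsub>K\<^esub> w0 = w0 \<otimes>\<^bsub>K\<^esub> \<one>\<^bsub>K\<^esub>" using w0K by simp
        then have "w0 = \<one>\<^bsub>K\<^esub>" using canc w0K by blast
        then show False using ne by simp
      qed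
      then have "comp ?x (w0 \<otimes>\<^bsub>K\<^esub> w0) = \<zero>\<^bsub>A\<^esub>" using comp_hom[OF w0K xA] by simp
      then have "?x \<otimes>\<^bsub>A\<^esub> ?x = \<zero>\<^bsub>A\<^esub>" using eqA by simp
      then show False using domain.integral[OF dom _ xc xc] xnz by auto
    qed
  qed
  have "\<one>\<^bsub>A\<^esub> = finsum A ?c {\<one>\<^bsub>K\<^esub>}" using e1 valid_sum[OF vc _ S1] by simp
  also have "\<dots> = ?c \<one>\<^bsub>K\<^esub>" using valid_carr[OF vc] by simp
  finally have "\<one>\<^bsub>A\<^esub> = ?c \<one>\<^bsub>K\<^esub>" .
  moreover have "?c \<one>\<^bsub>K\<^esub> \<in> Ag \<one>\<^bsub>K\<^esub>" using vc by (auto simp: valid_def)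
  ultimately show ?thesis by metis
qed

lemma pow_hom:
  assumes one: "\<one>\<^bsub>A\<^esub> \<in> Ag \<one>\<^bsub>K\<^esub>" and w: "w \<in> carrier K" and x: "x \<in> Ag w"
  shows "x [^]\<^bsub>A\<^esub> (n::nat) \<in> Ag (w [^]\<^bsub>K\<^esub> n)"
proof (induction n)
  case 0 then show ?case using one by simp
next
  case (Suc n)
  have "x [^]\<^bsub>A\<^esub> n \<otimes>\<^bsub>A\<^esub> x \<in> Ag (w [^]\<^bsub>K\<^esub> n \<otimes>\<^bsub>K\<^esub> w)"
    using Ag_mult[OF K.nat_pow_closed[OF w] w Suc x] .
  then show ?case by simp
qed

lemma pw_hom_deg:
  assumes one: "\<one>\<^bsub>A\<^esub> \<in> Ag \<one>\<^bsub>K\<^esub>" and J: "finite J"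
    and v: "\<And>j. j \<in> J \<Longrightarrow> dv j \<in> carrier K \<and> v j \<in> Ag (dv j)"
  shows "pw A v J z \<in> Ag (pw K dv J z)"
  using J v
proof (induction J rule: finite_induct)
  case empty then show ?case using one by (simp add: pw_def)
next
  case (insert j J)
  have vA: "v \<in> insert j J \<rightarrow> carrier A" using insert(4) Ag_carrier by blast
  have dK: "dv \<in> insert j J \<rightarrow> carrier K" using insert(4) by blast
  have e1: "pw A v (insert j J) z = v j [^]\<^bsub>A\<^esub> z j \<otimes>\<^bsub>A\<^esub> pw A v J z"
    unfolding pw_def using insert vA by (subst H.S.finprod_insert) auto
  have e2: "pw K dv (insert j J) z = dv j [^]\<^bsub>K\<^esub> z j \<otimes>\<^bsub>K\<^esub> pw K dv J z"
    unfolding pw_def using insert dK by (subst K.finprod_insert) auto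
  have h1: "v j [^]\<^bsub>A\<^esub> z j \<in> Ag (dv j [^]\<^bsub>K\<^esub> z j)" using pow_hom[OF one] insert(4) by auto
  have h2: "pw A v J z \<in> Ag (pw K dv J z)" using insert by auto
  show ?case unfolding e1 e2
  proof (rule Ag_mult[OF _ _ h1 h2])
    have dJ: "dv \<in> J \<rightarrow> carrier K" using dK by blast
    show "pw K dv J z \<in> carrier K" using K.pw_closed[OF dJ] .
    show "dv j [^]\<^bsub>K\<^esub> z j \<in> carrier K" using dK by auto
  qed
qed

lemma tsum_comp:
  assumes E: "\<And>e. e \<in> E \<Longrightarrow> dg e \<in> carrier K \<and> mn e \<in> Ag (dg e)"
  shows "s \<in> tsum R A \<iota> (mn ` E) \<Longrightarrow> w \<in> carrier K \<Longrightarrow> comp s w \<in> tsum R A \<iota> (mn ` {e\<in>E. dg e = w})"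
proof (induction rule: tsum.induct)
  case tz then show ?case by (simp add: comp_zero tsum.tz)
next
  case (ts r m s)
  have ME: "mn ` E \<subseteq> carrier A" using E Ag_carrier by blast
  obtain e where e: "e \<in> E" "m = mn e" using ts(2) by auto
  have mc: "m \<in> carrier A" using ME ts(2) by auto
  have sc: "s \<in> carrier A" using H.tsum_carr[OF ME ts(3)] .
  have hm: "\<iota> r \<otimes>\<^bsub>A\<^esub> m \<in> Ag (dg e)" using Ag_smul E e ts(1) by auto
  have "comp (\<iota> r \<otimes>\<^bsub>A\<^esub> m \<oplus>\<^bsub>A\<^esub> s) w = comp (\<iota> r \<otimes>\<^bsub>A\<^esub> m) w \<oplus>\<^bsub>A\<^esub> comp s w"
    using comp_add mc sc ts(1) by simp
  also have "\<dots> = (if w = dg e then \<iota> r \<otimes>\<^bsub>A\<^esub> m else \<zero>\<^bsub>A\<^esub>) \<oplus>\<^bsub>A\<^esub> comp s w"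
    using comp_hom[OF _ hm] E e by simp
  finally have eq: "comp (\<iota> r \<otimes>\<^bsub>A\<^esub> m \<oplus>\<^bsub>A\<^esub> s) w = (if w = dg e then \<iota> r \<otimes>\<^bsub>A\<^esub> m else \<zero>\<^bsub>A\<^esub>) \<oplus>\<^bsub>A\<^esub> comp s w" .
  show ?case
  proof (cases "w = dg e")
    case True
    then have "m \<in> mn ` {e\<in>E. dg e = w}" using e by auto
    then show ?thesis unfolding eq using True tsum.ts[OF ts(1) _ ts(4)[OF ts(5)]] by simp
  next
    case False
    then show ?thesis unfolding eq using comp_carr[OF sc] ts(4)[OF ts(5)] by simp
  qed
qed

lemma tsum_Ag:
  assumes w: "w \<in> carrier K" and M: "M \<subseteq> Ag w"
  shows "s \<in> tsum R A \<iota> M \<Longrightarrow> s \<in> Ag w"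
  by (induction rule: tsum.induct) (use w M Ag_zero Ag_add Ag_smul in auto)

end



lemma mon_gen_pw:
  assumes L: "comm_monoid L" and T: "finite T" "T \<subseteq> carrier L"
  shows "u \<in> mon_gen L T \<Longrightarrow> \<exists>a. (\<forall>t. t \<notin> T \<longrightarrow> a t = 0) \<and> pw L (\<lambda>t. t) T a = u"
proof (induction rule: mon_gen.induct)
  interpret L: comm_monoid L by (rule L)
  have idT: "(\<lambda>t. t) \<in> T \<rightarrow> carrier L" using T by auto
  {
    case one
    show ?case by (rule exI[of _ "\<lambda>_. 0"]) (simp add: L.pw_zero)
  next
    case (incl t)
    have "pw L (\<lambda>t. t) T (\<lambda>s. if s = t then 1 else 0) = t" using L.pw_delta[OF T(1) incl idT] by simp
    then show ?case by (intro exI[of _ "\<lambda>s. if s = t then 1 else 0"]) (auto simp: incl)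
  next
    case (mult x y)
    obtain a :: "'a \<Rightarrow> nat" where a: "\<forall>t. t \<notin> T \<longrightarrow> a t = 0" "pw L (\<lambda>t. t) T a = x" using mult by blast
    obtain b :: "'a \<Rightarrow> nat" where b: "\<forall>t. t \<notin> T \<longrightarrow> b t = 0" "pw L (\<lambda>t. t) T b = y" using mult by blast
    have "pw L (\<lambda>t. t) T (\<lambda>t. a t + b t) = x \<otimes>\<^bsub>L\<^esub> y" using L.pw_add[OF idT] a b by simp
    then show ?case using a b by (intro exI[of _ "\<lambda>j. a j + b j"]) auto
  }
qed




theorem proposition1p1p2p6:
  fixes R :: "('r,'m) ring_scheme"
    and B :: "('b,'n) ring_scheme" and \<iota>B :: "'r \<Rightarrow> 'b"
    and L :: "('l,'p) monoid_scheme" and Bg :: "'l \<Rightarrow> 'b set"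
    and A :: "('a,'q) ring_scheme" and \<iota>A :: "'r \<Rightarrow> 'a"
    and K :: "('k,'s) monoid_scheme" and Ag :: "'k \<Rightarrow> 'a set"
    and \<phi> :: "'b \<Rightarrow> 'a" and F :: "'l \<Rightarrow> 'k"
  assumes "cring R" and "noetherian_ring R"
    and "cancel_comm_monoid L" and "cancel_comm_monoid K"
    and "graded_algebra R B \<iota>B L Bg"
    and "graded_algebra R A \<iota>A K Ag"
    and "domain A"
    and "graded_morphism R B \<iota>B L Bg A \<iota>A K Ag \<phi> F"
    and "fg_monoid_set L (weight_monoid B L Bg)"
    and "\<forall>u\<in>carrier L. bij_betw \<phi> (Bg u) (Ag (F u))"
    and "fg_algebra R A \<iota>A"
  shows "fg_algebra R B \<iota>B"
proof -
  interpret GA: graded R A \<iota>A K Ag by unfold_locales (rule assms(6))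
  interpret GB: graded R B \<iota>B L Bg by unfold_locales (rule assms(5))
  have phom: "\<phi> \<in> ring_hom B A" and phi_iota: "\<And>r. r \<in> carrier R \<Longrightarrow> \<phi> (\<iota>B r) = \<iota>A r"
    and Fhom: "F \<in> hom L K" and F1: "F \<one>\<^bsub>L\<^esub> = \<one>\<^bsub>K\<^esub>"
    using assms(8) by (auto simp: graded_morphism_def)
  interpret PH: ring_hom_cring B A \<phi> using GB.cA GA.cA phom
    by (simp add: ring_hom_cring_def ring_hom_cring_axioms_def)
  have FK: "\<And>x. x \<in> carrier L \<Longrightarrow> F x \<in> carrier K" using Fhom by (auto simp: hom_def)
  have Fmult: "\<And>x y. x \<in> carrier L \<Longrightarrow> y \<in> carrier L \<Longrightarrow> F (x \<otimes>\<^bsub>L\<^esub> y) = F x \<otimes>\<^bsub>K\<^esub> F y"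
    using Fhom by (auto simp: hom_def)
  have cancK: "\<forall>a\<in>carrier K. \<forall>b\<in>carrier K. \<forall>c\<in>carrier K. a \<otimes>\<^bsub>K\<^esub> b = a \<otimes>\<^bsub>K\<^esub> c \<longrightarrow> b = c"
    using assms(4) unfolding cancel_comm_monoid_def by blast
  have bijU: "\<And>u. u \<in> carrier L \<Longrightarrow> bij_betw \<phi> (Bg u) (Ag (F u))" using assms(10) by blast
  have one_A: "\<one>\<^bsub>A\<^esub> \<in> Ag \<one>\<^bsub>K\<^esub>" using GA.one_hom[OF assms(7) cancK] .
  obtain G where G: "finite G" "G \<subseteq> carrier A" "generate_ring A (\<iota>A ` carrier R \<union> G) = carrier A"
    using assms(11) by (auto simp: fg_algebra_def)
  obtain T where T: "finite T" "T \<subseteq> carrier L" "mon_gen L T = weight_monoid B L Bg"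
    using assms(9) by (auto simp: fg_monoid_set_def)

  define I where "I = (\<Union>g\<in>G. (\<lambda>w. (w, GA.comp g w)) ` {w. GA.comp g w \<noteq> \<zero>\<^bsub>A\<^esub>})"
  have finS: "\<And>g. g \<in> G \<Longrightarrow> finite {w. GA.comp g w \<noteq> \<zero>\<^bsub>A\<^esub>}"
  proof -
    fix g assume "g \<in> G"
    then have "GA.valid (GA.comp g)" using GA.comp_valid G(2) by blast
    then show "finite {w. GA.comp g w \<noteq> \<zero>\<^bsub>A\<^esub>}" unfolding GA.valid_def by blast
  qed
  have finI: "finite I" unfolding I_def using G(1) finS by (intro finite_UN_I) auto
  have I_prop: "\<And>j. j \<in> I \<Longrightarrow> fst j \<in> carrier K \<and> snd j \<in> Ag (fst j)"
  proof -
    fix j assume "j \<in> I"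
    then obtain g w where gw: "g \<in> G" "j = (w, GA.comp g w)" "GA.comp g w \<noteq> \<zero>\<^bsub>A\<^esub>" unfolding I_def by auto
    have "GA.valid (GA.comp g)" using GA.comp_valid gw(1) G(2) by blast
    then show "fst j \<in> carrier K \<and> snd j \<in> Ag (fst j)" using gw unfolding GA.valid_def by auto
  qed
  define J where "J = Inl ` I \<union> Inr ` T"
  have finJ: "finite J" unfolding J_def using finI T(1) by simp
  define dg where "dg z = pw K fst I (\<lambda>i. z (Inl i))" for z :: "('k \<times> 'a) + 'l \<Rightarrow> nat"
  define mn where "mn z = pw A snd I (\<lambda>i. z (Inl i))" for z :: "('k \<times> 'a) + 'l \<Rightarrow> nat"
  define wt where "wt z = pw L (\<lambda>t. t) T (\<lambda>t. z (Inr t))" for z :: "('k \<times> 'a) + 'l \<Rightarrow> nat"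
  have fstI: "fst \<in> I \<rightarrow> carrier K" using I_prop by auto
  have sndI: "snd \<in> I \<rightarrow> carrier A" using I_prop GA.Ag_carrier by blast
  have idT: "(\<lambda>t. t) \<in> T \<rightarrow> carrier L" using T(2) by auto
  have dg_c: "\<And>z. dg z \<in> carrier K" unfolding dg_def using GA.K.pw_closed[OF fstI] .
  have mn_c: "\<And>z. mn z \<in> carrier A" unfolding mn_def using GA.H.S.pw_closed[OF sndI] .
  have wt_c: "\<And>z. wt z \<in> carrier L" unfolding wt_def using GB.K.pw_closed[OF idT] .
  have mn_Ag: "\<And>z. mn z \<in> Ag (dg z)" unfolding mn_def dg_def
    by (rule GA.pw_hom_deg[OF one_A finI]) (use I_prop in auto)
  define E where "E = {z :: ('k \<times> 'a) + 'l \<Rightarrow> nat. \<forall>j. j \<notin> Inl ` I \<longrightarrow> z j = 0}"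
  define SP where "SP = tsum R A \<iota>A (mn ` E)"
  have mnE: "mn ` E \<subseteq> carrier A" using mn_c by auto
  have mn_add: "\<And>e e'. mn (\<lambda>j. e j + e' j) = mn e \<otimes>\<^bsub>A\<^esub> mn e'"
    unfolding mn_def using GA.H.S.pw_add[OF sndI] by simp
  have mn_mult: "\<And>m m'. m \<in> mn ` E \<Longrightarrow> m' \<in> mn ` E \<Longrightarrow> m \<otimes>\<^bsub>A\<^esub> m' \<in> mn ` E"
  proof -
    fix m m' assume "m \<in> mn ` E" "m' \<in> mn ` E"
    then obtain e e' where "e \<in> E" "e' \<in> E" "m = mn e" "m' = mn e'" by auto
    then show "m \<otimes>\<^bsub>A\<^esub> m' \<in> mn ` E" using mn_add[of e e'] unfolding E_def
      by (intro image_eqI[of _ _ "\<lambda>j. e j + e' j"]) auto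
  qed
  have zE: "(\<lambda>_. 0) \<in> E" unfolding E_def by simp
  have mn0: "mn (\<lambda>_. 0) = \<one>\<^bsub>A\<^esub>" unfolding mn_def by (rule GA.H.S.pw_zero)
  have iota_SP: "\<And>r. r \<in> carrier R \<Longrightarrow> \<iota>A r \<in> SP"
  proof -
    fix r assume r: "r \<in> carrier R"
    have "\<iota>A r \<otimes>\<^bsub>A\<^esub> mn (\<lambda>_. 0) \<in> SP" unfolding SP_def
      by (rule GA.H.tsum_term[OF r _ mnE]) (use zE in auto)
    then show "\<iota>A r \<in> SP" using mn0 r by simp
  qed
  have G_SP: "\<And>g. g \<in> G \<Longrightarrow> g \<in> SP"
  proof -
    fix g assume g: "g \<in> G"
    have gc: "g \<in> carrier A" using g G(2) by auto
    let ?S = "{w. GA.comp g w \<noteq> \<zero>\<^bsub>A\<^esub>}"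
    have vg: "GA.valid (GA.comp g)" and eg: "g = finsum A (GA.comp g) ?S" using GA.comp_valid[OF gc] by blast+
    have fS: "finite ?S" using vg by (auto simp: GA.valid_def)
    have "finsum A (GA.comp g) ?S \<in> SP"
    proof (rule finsum_in_closed)
      show "abelian_monoid A" by (rule GA.H.S.abelian_monoid_axioms)
      show "finite ?S" by (rule fS)
      show "SP \<subseteq> carrier A" unfolding SP_def using GA.H.tsum_carr[OF mnE] by auto
      show "\<zero>\<^bsub>A\<^esub> \<in> SP" unfolding SP_def by (rule tsum.tz)
      show "\<And>x y. x \<in> SP \<Longrightarrow> y \<in> SP \<Longrightarrow> x \<oplus>\<^bsub>A\<^esub> y \<in> SP" unfolding SP_def using GA.H.tsum_add[OF mnE] by auto
      fix w assume w: "w \<in> ?S"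
      define j0 where "j0 = (w, GA.comp g w)"
      have j0I: "j0 \<in> I" unfolding I_def j0_def using g w by auto
      define e :: "('k \<times> 'a) + 'l \<Rightarrow> nat" where "e = (\<lambda>j. if j = Inl j0 then 1 else (0::nat))"
      have eE: "e \<in> E" unfolding E_def e_def using j0I by auto
      have "mn e = pw A snd I (\<lambda>i. if i = j0 then 1 else 0)" unfolding mn_def e_def by simp
      also have "\<dots> = snd j0" using GA.H.S.pw_delta[OF finI j0I sndI] .
      finally have mne: "mn e = GA.comp g w" unfolding j0_def by simp
      have "\<iota>A \<one>\<^bsub>R\<^esub> \<otimes>\<^bsub>A\<^esub> mn e \<in> SP" unfolding SP_def
        by (rule GA.H.tsum_term[OF GA.H.R.one_closed _ mnE]) (use eE in auto)
      moreover have "GA.comp g w \<in> carrier A" using mne mn_c by metis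
      ultimately show "GA.comp g w \<in> SP" using mne by simp
    qed
    then show "g \<in> SP" using eg by simp
  qed
  have A_SP: "carrier A \<subseteq> SP"
  proof
    fix x assume "x \<in> carrier A"
    then have "x \<in> generate_ring A (\<iota>A ` carrier R \<union> G)" using G(3) by simp
    then show "x \<in> SP"
    proof (induction rule: generate_ring.induct)
      case one then show ?case using iota_SP[OF GA.H.R.one_closed] by simp
    next
      case (incl h) then show ?case using iota_SP G_SP by auto
    next
      case (a_inv h) then show ?case unfolding SP_def using GA.H.tsum_neg[OF mnE] by auto
    next
      case (eng_add h1 h2) then show ?case unfolding SP_def using GA.H.tsum_add[OF mnE] by auto
    next
      case (eng_mult h1 h2) then show ?case unfolding SP_def using GA.H.tsum_mult[OF mnE mn_mult] by auto
    qed
  qed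
  define M where "M = {z :: ('k \<times> 'a) + 'l \<Rightarrow> nat. (\<forall>j. j \<notin> J \<longrightarrow> z j = 0) \<and> dg z = F (wt z)}"
  define Xs where "Xs = M - {\<lambda>_. 0}"
  define mins where "mins = {m\<in>Xs. \<forall>y\<in>Xs. y \<le> m \<longrightarrow> y = m}"
  have XsJ: "\<And>z j. z \<in> Xs \<Longrightarrow> j \<notin> J \<Longrightarrow> z j = 0" unfolding Xs_def M_def by auto
  have fin_mins: "finite mins" unfolding mins_def by (rule dickson_finite[where J=J and Xs=Xs]) (auto intro: finJ XsJ)
  have below: "\<And>x. x \<in> Xs \<Longrightarrow> \<exists>m\<in>mins. m \<le> x" unfolding mins_def by (rule dickson_below[where J=J and Xs=Xs]) (auto intro: finJ XsJ)
  have mins_M: "mins \<subseteq> M" unfolding mins_def Xs_def by auto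
  have zM: "(\<lambda>_. 0) \<in> M"
  proof -
    have "dg (\<lambda>_. 0) = \<one>\<^bsub>K\<^esub>" unfolding dg_def by (rule GA.K.pw_zero)
    moreover have "wt (\<lambda>_. 0) = \<one>\<^bsub>L\<^esub>" unfolding wt_def by (rule GB.K.pw_zero)
    ultimately show ?thesis unfolding M_def using F1 by simp
  qed
  have pre_ex: "\<And>z. z \<in> M \<Longrightarrow> \<exists>b. b \<in> Bg (wt z) \<and> \<phi> b = mn z"
  proof -
    fix z assume z: "z \<in> M"
    have "mn z \<in> Ag (F (wt z))" using mn_Ag[of z] z unfolding M_def by simp
    moreover have "\<phi> ` Bg (wt z) = Ag (F (wt z))" using bijU[OF wt_c] unfolding bij_betw_def by blast
    ultimately show "\<exists>b. b \<in> Bg (wt z) \<and> \<phi> b = mn z" by (metis imageE)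
  qed
  define pre where "pre z = (SOME b. b \<in> Bg (wt z) \<and> \<phi> b = mn z)" for z
  have pre_prop: "\<And>z. z \<in> M \<Longrightarrow> pre z \<in> Bg (wt z) \<and> \<phi> (pre z) = mn z"
    unfolding pre_def using pre_ex by (rule someI_ex)
  have injU: "\<And>u. u \<in> carrier L \<Longrightarrow> inj_on \<phi> (Bg u)" using bijU by (auto simp: bij_betw_def)
  have pre_uniq: "\<And>z b. z \<in> M \<Longrightarrow> b \<in> Bg (wt z) \<Longrightarrow> \<phi> b = mn z \<Longrightarrow> b = pre z"
    using pre_prop injU[OF wt_c] by (metis inj_on_def)
  define H where "H = pre ` insert (\<lambda>_. 0) mins"
  have finH: "finite H" unfolding H_def using fin_mins by simp
  have HB: "H \<subseteq> carrier B" unfolding H_def using pre_prop zM mins_M GB.Ag_carrier[OF wt_c] by blast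
  have genB: "\<iota>B ` carrier R \<union> H \<subseteq> carrier B" using HB by auto
  define Bring where "Bring = generate_ring B (\<iota>B ` carrier R \<union> H)"
  have wt_add: "\<And>z z'. wt (\<lambda>j. z j + z' j) = wt z \<otimes>\<^bsub>L\<^esub> wt z'"
    unfolding wt_def using GB.K.pw_add[OF idT] by simp
  have dg_add: "\<And>z z'. dg (\<lambda>j. z j + z' j) = dg z \<otimes>\<^bsub>K\<^esub> dg z'"
    unfolding dg_def using GA.K.pw_add[OF fstI] by simp
  have incl_B: "\<And>x. x \<in> \<iota>B ` carrier R \<union> H \<Longrightarrow> x \<in> Bring" unfolding Bring_def by (rule generate_ring.incl)
  have claim1: "\<And>z. z \<in> M \<Longrightarrow> pre z \<in> Bring"
  proof -
    have "\<forall>z. sum z J = n \<longrightarrow> z \<in> M \<longrightarrow> pre z \<in> Bring" for n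
    proof (induction n rule: less_induct)
      case (less n)
      show ?case
      proof (intro allI impI)
        fix z assume zn: "sum z J = n" and zM': "z \<in> M"
        show "pre z \<in> Bring"
        proof (cases "z = (\<lambda>_. 0)")
          case True then show ?thesis using incl_B unfolding H_def by auto
        next
          case False
          then have zX: "z \<in> Xs" using zM' unfolding Xs_def by auto
          obtain m where m: "m \<in> mins" "m \<le> z" using below[OF zX] by blast
          have mM: "m \<in> M" using m mins_M by auto
          have mnz: "m \<noteq> (\<lambda>_. 0)" using m unfolding mins_def Xs_def by auto
          define d where "d = (\<lambda>j. z j - m j)"
          have zmd: "z = (\<lambda>j. m j + d j)" unfolding d_def using m(2) by (auto simp: le_fun_def)
          have dJ: "\<forall>j. j \<notin> J \<longrightarrow> d j = 0" using zM' unfolding d_def M_def by auto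
          have wtz: "wt z = wt m \<otimes>\<^bsub>L\<^esub> wt d" by (subst zmd) (rule wt_add)
          have dgz: "dg z = dg m \<otimes>\<^bsub>K\<^esub> dg d" by (subst zmd) (rule dg_add)
          have "dg m \<otimes>\<^bsub>K\<^esub> dg d = F (wt m) \<otimes>\<^bsub>K\<^esub> F (wt d)"
            using dgz wtz zM' Fmult wt_c unfolding M_def by auto
          then have "F (wt m) \<otimes>\<^bsub>K\<^esub> dg d = F (wt m) \<otimes>\<^bsub>K\<^esub> F (wt d)" using mM unfolding M_def by simp
          then have "dg d = F (wt d)" using cancK FK wt_c dg_c by blast
          then have dM: "d \<in> M" unfolding M_def using dJ by simp
          obtain j where j: "m j \<noteq> 0" using mnz by auto
          have jJ: "j \<in> J" using j mM unfolding M_def by auto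
          have mjz: "m j \<le> z j" using m(2) by (simp add: le_fun_def)
          have "sum d J < sum z J"
            apply (rule sum_strict_mono_ex1[OF finJ])
            using j jJ mjz unfolding d_def by (auto intro!: bexI[of _ j])
          then have pd: "pre d \<in> Bring" using less.IH zn dM by blast
          have pm: "pre m \<in> Bring" using incl_B m(1) unfolding H_def by auto
          have pmc: "pre m \<in> carrier B" and pdc: "pre d \<in> carrier B"
            using pre_prop[OF mM] pre_prop[OF dM] GB.Ag_carrier[OF wt_c] by auto
          have b1: "pre m \<otimes>\<^bsub>B\<^esub> pre d \<in> Bg (wt z)"
            using GB.Ag_mult[OF wt_c wt_c] pre_prop[OF mM] pre_prop[OF dM] wtz by simp
          have "\<phi> (pre m \<otimes>\<^bsub>B\<^esub> pre d) = mn m \<otimes>\<^bsub>A\<^esub> mn d"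
            using pre_prop[OF mM] pre_prop[OF dM] pmc pdc by simp
          also have "\<dots> = mn z" by (subst zmd) (rule mn_add[symmetric])
          finally have "pre z = pre m \<otimes>\<^bsub>B\<^esub> pre d" using pre_uniq[OF zM' b1] by simp
          then show ?thesis using pm pd unfolding Bring_def by (simp add: generate_ring.eng_mult)
        qed
      qed
    qed
    then show "\<And>z. z \<in> M \<Longrightarrow> pre z \<in> Bring" by blast
  qed
  have zero_B: "\<zero>\<^bsub>B\<^esub> \<in> Bring" unfolding Bring_def by (rule GB.H.S.zero_in_generate)
  have claim3: "\<And>y. y \<in> tsum R A \<iota>A (mn ` {e\<in>E. dg e = F u}) \<Longrightarrow> \<forall>b\<in>Bg u. \<phi> b = y \<longrightarrow> b \<in> Bring"
    if u: "u \<in> carrier L" and a: "\<forall>t. t \<notin> T \<longrightarrow> a t = 0" "pw L (\<lambda>t. t) T a = u" for u a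
  proof -
    fix y assume "y \<in> tsum R A \<iota>A (mn ` {e\<in>E. dg e = F u})"
    then show "\<forall>b\<in>Bg u. \<phi> b = y \<longrightarrow> b \<in> Bring"
    proof (induction rule: tsum.induct)
      case tz
      show ?case
      proof (intro ballI impI)
        fix b assume b: "b \<in> Bg u" "\<phi> b = \<zero>\<^bsub>A\<^esub>"
        have "\<zero>\<^bsub>B\<^esub> \<in> Bg u" "\<phi> \<zero>\<^bsub>B\<^esub> = \<zero>\<^bsub>A\<^esub>" using GB.Ag_zero[OF u] by auto
        then have "b = \<zero>\<^bsub>B\<^esub>" using injU[OF u] b by (metis inj_on_def)
        then show "b \<in> Bring" using zero_B by simp
      qed
    next
      case (ts r m s)
      obtain e where e: "e \<in> E" "dg e = F u" "m = mn e" using ts.hyps(2) by auto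
      define z where "z = (\<lambda>j. case j of Inl i \<Rightarrow> e (Inl i) | Inr t \<Rightarrow> a t)"
      have mnz: "mn z = mn e" unfolding mn_def z_def by simp
      have dgz: "dg z = dg e" unfolding dg_def z_def by simp
      have wtz: "wt z = u" unfolding wt_def z_def using a by simp
      have zJ: "\<forall>j. j \<notin> J \<longrightarrow> z j = 0"
      proof (intro allI impI)
        fix j assume j: "j \<notin> J"
        show "z j = 0"
        proof (cases j)
          case (Inl i) then show ?thesis using j e(1) unfolding z_def J_def E_def by auto
        next
          case (Inr t) then show ?thesis using j a(1) unfolding z_def J_def by auto
        qed
      qed
      have zM': "z \<in> M" unfolding M_def using zJ dgz wtz e(2) by simp
      have pz: "pre z \<in> Bring" "pre z \<in> Bg u" "\<phi> (pre z) = mn e"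
        using claim1[OF zM'] pre_prop[OF zM'] wtz mnz by auto
      have pzc: "pre z \<in> carrier B" using pz(2) GB.Ag_carrier[OF u] by auto
      define b1 where "b1 = \<iota>B r \<otimes>\<^bsub>B\<^esub> pre z"
      have b1u: "b1 \<in> Bg u" unfolding b1_def using GB.Ag_smul[OF u ts.hyps(1) pz(2)] .
      have b1R: "b1 \<in> Bring" unfolding b1_def Bring_def
        using pz(1) incl_B[of "\<iota>B r"] ts.hyps(1) unfolding Bring_def by (auto intro: generate_ring.eng_mult)
      have b1phi: "\<phi> b1 = \<iota>A r \<otimes>\<^bsub>A\<^esub> m"
        unfolding b1_def using pzc ts.hyps(1) phi_iota pz(3) e(3) by simp
      have sAg: "s \<in> Ag (F u)"
      proof (rule GA.tsum_Ag[OF FK[OF u] _ ts.hyps(3)])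
        show "mn ` {e \<in> E. dg e = F u} \<subseteq> Ag (F u)"
        proof
          fix x assume "x \<in> mn ` {e \<in> E. dg e = F u}"
          then obtain e' where e': "x = mn e'" "dg e' = F u" by blast
          show "x \<in> Ag (F u)" unfolding e'(1) using mn_Ag[of e'] e'(2) by simp
        qed
      qed
      obtain b2 where b2: "b2 \<in> Bg u" "\<phi> b2 = s" using sAg bijU[OF u] unfolding bij_betw_def by force
      have b2R: "b2 \<in> Bring" using ts.IH b2 by blast
      have b2c: "b2 \<in> carrier B" and b1c: "b1 \<in> carrier B" using b2(1) b1u GB.Ag_carrier[OF u] by auto
      show ?case
      proof (intro ballI impI)
        fix b assume b: "b \<in> Bg u" "\<phi> b = \<iota>A r \<otimes>\<^bsub>A\<^esub> m \<oplus>\<^bsub>A\<^esub> s"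
        have "b1 \<oplus>\<^bsub>B\<^esub> b2 \<in> Bg u" using GB.Ag_add[OF u b1u b2(1)] .
        moreover have "\<phi> (b1 \<oplus>\<^bsub>B\<^esub> b2) = \<iota>A r \<otimes>\<^bsub>A\<^esub> m \<oplus>\<^bsub>A\<^esub> s" using b1c b2c b1phi b2(2) by simp
        ultimately have "b = b1 \<oplus>\<^bsub>B\<^esub> b2" using injU[OF u] b by (metis inj_on_def)
        then show "b \<in> Bring" using b1R b2R unfolding Bring_def by (simp add: generate_ring.eng_add)
      qed
    qed
  qed
  have claim4: "\<And>u b. u \<in> carrier L \<Longrightarrow> b \<in> Bg u \<Longrightarrow> b \<in> Bring"
  proof -
    fix u b assume u: "u \<in> carrier L" and b: "b \<in> Bg u"
    show "b \<in> Bring"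
    proof (cases "b = \<zero>\<^bsub>B\<^esub>")
      case True then show ?thesis using zero_B by simp
    next
      case False
      then have "u \<in> weight_monoid B L Bg" unfolding weight_monoid_def using u b by auto
      then have "u \<in> mon_gen L T" using T(3) by simp
      then obtain a where a: "\<forall>t. t \<notin> T \<longrightarrow> a t = 0" "pw L (\<lambda>t. t) T a = u"
        using mon_gen_pw[OF GB.cK T(1,2)] by blast
      have pb: "\<phi> b \<in> Ag (F u)" using bijU[OF u] b unfolding bij_betw_def by auto
      have pbc: "\<phi> b \<in> carrier A" using GA.Ag_carrier[OF FK[OF u] pb] .
      have "GA.comp (\<phi> b) (F u) \<in> tsum R A \<iota>A (mn ` {e\<in>E. dg e = F u})"
        by (rule GA.tsum_comp[of E dg mn]) (use dg_c mn_Ag A_SP pbc FK[OF u] in \<open>auto simp: SP_def\<close>)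
      moreover have "GA.comp (\<phi> b) (F u) = \<phi> b" using GA.comp_hom[OF FK[OF u] pb] by simp
      ultimately show ?thesis using claim3[OF u a] b by auto
    qed
  qed
  have Bring_c: "Bring \<subseteq> carrier B" unfolding Bring_def by (rule GB.H.S.generate_ring_incl[OF genB])
  have claim5: "carrier B \<subseteq> Bring"
  proof
    fix b assume bc: "b \<in> carrier B"
    let ?c = "GB.comp b"
    let ?S = "{w. ?c w \<noteq> \<zero>\<^bsub>B\<^esub>}"
    have vb: "GB.valid ?c" and eb: "b = finsum B ?c ?S" using GB.comp_valid[OF bc] by blast+
    have "finsum B ?c ?S \<in> Bring"
    proof (rule finsum_in_closed)
      show "abelian_monoid B" by (rule GB.H.S.abelian_monoid_axioms)
      show "finite ?S" using vb unfolding GB.valid_def by blast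
      show "Bring \<subseteq> carrier B" by (rule Bring_c)
      show "\<zero>\<^bsub>B\<^esub> \<in> Bring" by (rule zero_B)
      show "\<And>x y. x \<in> Bring \<Longrightarrow> y \<in> Bring \<Longrightarrow> x \<oplus>\<^bsub>B\<^esub> y \<in> Bring" unfolding Bring_def
        by (rule generate_ring.eng_add)
      fix w assume w: "w \<in> ?S"
      then have wL: "w \<in> carrier L" using vb unfolding GB.valid_def by blast
      then have "?c w \<in> Bg w" using vb unfolding GB.valid_def by blast
      then show "?c w \<in> Bring" using claim4[OF wL] by blast
    qed
    then show "b \<in> Bring" by (rule ssubst[OF eb])
  qed
  have "generate_ring B (\<iota>B ` carrier R \<union> H) = carrier B"
    using Bring_c claim5 unfolding Bring_def by (rule equalityI)
  then have "finite H \<and> H \<subseteq> carrier B \<and> generate_ring B (\<iota>B ` carrier R \<union> H) = carrier B"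
    using finH HB by (intro conjI)
  then show ?thesis unfolding fg_algebra_def by (rule exI)
qed



end
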